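(* Let $m_1,m_2,m_3\ge 1$ be integers and let $a\neq b$ be complex numbers. (a) If $T_{m_1}(a)=T_{m_1}(b)$ and $T_{m_2}(a)=T_{m_2}(b)$, then either $T_l(a)=T_l(b)$ for $l=\gcd(m_1,m_2)$, or $T_{m_1m_2}'(a)=T_{m_1m_2}'(b)=0$. (b) If $T_{m_j}(a)=T_{m_j}(b)$ for $j=1,2,3$, then there exist distinct indices $i_1,i_2\in\{1,2,3\}$ such that $T_l(a)=T_l(b)$ for $l=\gcd(m_{i_1},m_{i_2})$.
   Context: $T_n$ denotes the Chebyshev polynomial of the first kind of degree $n$, defined by $T_n(\cos\phi)=\cos(n\phi)$. *)

theory Defs
  imports "HOL-Computational_Algebra.Polynomial"
begin

text \<open>Chebyshev polynomials of the first kind, via the standard recurrence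
  T_0 = 1, T_1 = X, T_(n+2) = 2 X T_(n+1) - T_n; these are exactly the
  polynomials with T_n(cos phi) = cos(n phi).\<close>
fun cheb_T :: "nat \<Rightarrow> 'a::comm_ring_1 poly" where
  "cheb_T 0 = 1"
| "cheb_T (Suc 0) = [:0, 1:]"
| "cheb_T (Suc (Suc n)) = [:0, 2:] * cheb_T (Suc n) - cheb_T n"

end

theory Submission
  imports Defs
begin

lemma cheb_param:
  fixes u :: complex assumes "u \<noteq> 0"
  shows "poly (cheb_T n) ((u + inverse u)/2) = (u^n + inverse u ^ n)/2"
proof (induction n rule: cheb_T.induct)
  case 1 then show ?case by simp
next
  case 2 then show ?case by simp
next
  case (3 n)
  have "poly (cheb_T (Suc (Suc n))) ((u + inverse u)/2)
      = (u + inverse u) * poly (cheb_T (Suc n)) ((u + inverse u)/2) - poly (cheb_T n) ((u + inverse u)/2)"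
    by simp
  also have "\<dots> = (u + inverse u) * ((u^Suc n + inverse u ^ Suc n)/2) - (u^n + inverse u ^ n)/2"
    by (simp only: 3)
  also have "\<dots> = (u^Suc (Suc n) + inverse u ^ Suc (Suc n))/2"
    using assms by (simp add: field_simps power_Suc)
  finally show ?case .
qed

lemma cheb_deriv_id:
  fixes x :: complex
  shows "(1 - x^2) * poly (pderiv (cheb_T n)) x = of_nat n * (x * poly (cheb_T n) x - poly (cheb_T (Suc n)) x)"
proof (induction n rule: nat_less_induct)
  case (1 n)
  show ?case
  proof (cases n)
    case 0 then show ?thesis by simp
  next
    case (Suc k) note k = this
    show ?thesis
    proof (cases k)
      case 0 then show ?thesis using k by (simp add: algebra_simps power2_eq_square pderiv_pCons)
    next
      case (Suc j)
      have IH1: "(1 - x^2) * poly (pderiv (cheb_T j)) x = of_nat j * (x * poly (cheb_T j) x - poly (cheb_T (Suc j)) x)"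
        using 1 k Suc by auto
      have IH2: "(1 - x^2) * poly (pderiv (cheb_T (Suc j))) x = of_nat (Suc j) * (x * poly (cheb_T (Suc j)) x - poly (cheb_T (Suc (Suc j))) x)"
        using 1 k Suc by auto
      have d: "poly (pderiv (cheb_T (Suc (Suc j)))) x = 2 * poly (cheb_T (Suc j)) x + 2 * x * poly (pderiv (cheb_T (Suc j))) x - poly (pderiv (cheb_T j)) x"
        by (simp add: pderiv_mult pderiv_diff pderiv_pCons pderiv_smult algebra_simps)
      have t2: "poly (cheb_T (Suc (Suc j))) x = 2 * x * poly (cheb_T (Suc j)) x - poly (cheb_T j) x" by simp
      have t3: "poly (cheb_T (Suc (Suc (Suc j)))) x = 2 * x * poly (cheb_T (Suc (Suc j))) x - poly (cheb_T (Suc j)) x" by simp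
      have "(1 - x^2) * poly (pderiv (cheb_T (Suc (Suc j)))) x
          = 2 * (1 - x^2) * poly (cheb_T (Suc j)) x + 2 * x * ((1 - x^2) * poly (pderiv (cheb_T (Suc j))) x) - (1 - x^2) * poly (pderiv (cheb_T j)) x"
        unfolding d by (simp add: algebra_simps)
      also have "\<dots> = of_nat (Suc (Suc j)) * (x * poly (cheb_T (Suc (Suc j))) x - poly (cheb_T (Suc (Suc (Suc j)))) x)"
        unfolding IH1 IH2 t3 unfolding t2 by (simp add: algebra_simps power2_eq_square)
      finally show ?thesis using k Suc by simp
    qed
  qed
qed


lemma param_exists:
  fixes a :: complex
  obtains u where "u \<noteq> 0" "a = (u + inverse u)/2"
proof -
  define s where "s = csqrt (a^2 - 1)"
  have s2: "s^2 = a^2 - 1" unfolding s_def by simp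
  have p: "(a + s) * (a - s) = 1" using s2 by (simp add: algebra_simps power2_eq_square)
  hence nz: "a + s \<noteq> 0" by auto
  have "inverse (a + s) = a - s" using p by (simp add: inverse_unique)
  hence "a = ((a + s) + inverse (a + s))/2" by simp
  thus ?thesis using that nz by blast
qed

lemma cheb_eq_iff:
  fixes u v :: complex assumes "u \<noteq> 0" "v \<noteq> 0"
  shows "poly (cheb_T n) ((u + inverse u)/2) = poly (cheb_T n) ((v + inverse v)/2)
     \<longleftrightarrow> (u/v)^n = 1 \<or> (u*v)^n = 1"
proof -
  define p where "p = u^n" define q where "q = v^n"
  have pq: "p \<noteq> 0" "q \<noteq> 0" using assms unfolding p_def q_def by auto
  have "poly (cheb_T n) ((u + inverse u)/2) = poly (cheb_T n) ((v + inverse v)/2)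
     \<longleftrightarrow> p + inverse p = q + inverse q"
    unfolding cheb_param[OF assms(1)] cheb_param[OF assms(2)] p_def q_def power_inverse
    by (simp only: divide_cancel_right) simp
  also have "\<dots> \<longleftrightarrow> (p - q) * (p * q - 1) = 0"
    using pq by (simp add: field_simps)
  also have "\<dots> \<longleftrightarrow> p = q \<or> p * q = 1" by simp
  also have "\<dots> \<longleftrightarrow> (u/v)^n = 1 \<or> (u*v)^n = 1"
    using pq by (simp add: p_def q_def power_divide power_mult_distrib)
  finally show ?thesis .
qed

lemma pow_gcd:
  fixes x :: complex assumes "x^m = 1" "x^n = 1"
  shows "x^(gcd m n) = 1"
proof (cases "m = 0")
  case True then show ?thesis using assms by simp
next
  case False
  then obtain i j where ij: "m * i = n * j + gcd m n" using bezout_nat by blast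
  have "x^(m*i) = 1" using assms by (simp add: power_mult)
  moreover have "x^(n*j) = 1" using assms by (simp add: power_mult)
  ultimately show ?thesis using ij by (simp add: power_add)
qed

lemma deriv_zero:
  fixes u :: complex assumes "u \<noteq> 0" "u^2 \<noteq> 1" "u^(2*N) = 1"
  shows "poly (pderiv (cheb_T N)) ((u + inverse u)/2) = 0"
proof -
  define a where "a = (u + inverse u)/2"
  have h: "(1 - a^2) * poly (pderiv (cheb_T N)) a = of_nat N * (a * poly (cheb_T N) a - poly (cheb_T (Suc N)) a)"
    by (rule cheb_deriv_id)
  have w: "inverse u ^ N = u ^ N"
  proof -
    have "(u^N)^2 = 1" using assms(3) by (simp add: power_mult[symmetric] mult.commute)
    hence "u^N * u^N = 1" by (simp add: power2_eq_square)
    hence "inverse (u^N) = u^N" by (rule inverse_unique)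
    thus ?thesis by (simp add: power_inverse)
  qed
  have "a * poly (cheb_T N) a - poly (cheb_T (Suc N)) a = 0"
  proof -
    have T1: "poly (cheb_T N) a = u^N" unfolding a_def cheb_param[OF assms(1)] w by simp
    have T2: "poly (cheb_T (Suc N)) a = (u + inverse u) * u^N / 2"
      unfolding a_def cheb_param[OF assms(1)] power_Suc w by (simp add: algebra_simps)
    show ?thesis unfolding T1 T2 by (simp add: a_def)
  qed
  hence "(1 - a^2) * poly (pderiv (cheb_T N)) a = 0" using h by simp
  moreover have "1 - a^2 \<noteq> 0"
  proof
    assume "1 - a^2 = 0"
    hence "(u - inverse u)^2 = 0" unfolding a_def using assms(1)
      by (simp add: field_simps power2_eq_square)
    hence "u = inverse u" by simp
    hence "u * u = 1" using assms(1) by (metis right_inverse)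
    thus False using assms(2) by (simp add: power2_eq_square)
  qed
  ultimately show ?thesis unfolding a_def by simp
qed


lemma mixed:
  fixes u v :: complex assumes "u \<noteq> 0" "v \<noteq> 0" "(u/v)^p = 1" "(u*v)^q = 1"
  shows "((u/v)^(gcd p q) = 1 \<or> (u*v)^(gcd p q) = 1)
     \<or> (poly (pderiv (cheb_T (p*q))) ((u + inverse u)/2) = 0 \<and> poly (pderiv (cheb_T (p*q))) ((v + inverse v)/2) = 0)"
proof (cases "u^2 = 1 \<or> v^2 = 1")
  case True
  have "(u/v)^q = 1"
  proof (cases "u^2 = 1")
    case True
    have "(u/v) * (u*v) = u^2" using assms by (simp add: power2_eq_square)
    hence "(u/v)^q * (u*v)^q = 1" using True by (metis power_mult_distrib power_one)
    thus ?thesis using assms(4) by simp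
  next
    case False
    hence v2: "v^2 = 1" using \<open>u^2 = 1 \<or> v^2 = 1\<close> by simp
    have "u*v = (u/v) * v^2" using assms by (simp add: power2_eq_square)
    hence "u*v = u/v" using v2 by simp
    thus ?thesis using assms(4) by simp
  qed
  thus ?thesis using pow_gcd[OF assms(3)] by blast
next
  case False
  have "u^2 = (u/v) * (u*v)" using assms by (simp add: power2_eq_square)
  hence "u^(2*(p*q)) = ((u/v)^p)^q * ((u*v)^q)^p"
    by (metis (no_types, lifting) mult.commute power_mult power_mult_distrib)
  hence hu: "u^(2*(p*q)) = 1" using assms by simp
  have "v^2 = (u*v) / (u/v)" using assms by (simp add: power2_eq_square)
  hence "v^(2*(p*q)) = ((u*v)^q)^p / ((u/v)^p)^q"
    by (metis (no_types, lifting) mult.commute power_mult power_divide)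
  hence hv: "v^(2*(p*q)) = 1" using assms by simp
  show ?thesis using deriv_zero[OF assms(1) _ hu] deriv_zero[OF assms(2) _ hv] False by blast
qed

theorem lemma2p1:
  fixes m1 m2 m3 :: nat and a b :: complex
  assumes "m1 \<ge> 1" and "m2 \<ge> 1" and "m3 \<ge> 1" and "a \<noteq> b"
  shows "(poly (cheb_T m1) a = poly (cheb_T m1) b \<and> poly (cheb_T m2) a = poly (cheb_T m2) b
           \<longrightarrow> poly (cheb_T (gcd m1 m2)) a = poly (cheb_T (gcd m1 m2)) b
               \<or> (poly (pderiv (cheb_T (m1 * m2))) a = 0 \<and> poly (pderiv (cheb_T (m1 * m2))) b = 0))
       \<and> (poly (cheb_T m1) a = poly (cheb_T m1) b \<and> poly (cheb_T m2) a = poly (cheb_T m2) b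
           \<and> poly (cheb_T m3) a = poly (cheb_T m3) b
           \<longrightarrow> (\<exists>i1\<in>{1::nat,2,3}. \<exists>i2\<in>{1::nat,2,3}. i1 \<noteq> i2 \<and>
                 (let m = (\<lambda>i::nat. if i = 1 then m1 else if i = 2 then m2 else m3);
                      l = gcd (m i1) (m i2)
                  in poly (cheb_T l) a = poly (cheb_T l) b)))"
proof -
  obtain u where u: "u \<noteq> 0" "a = (u + inverse u)/2" using param_exists by blast
  obtain v where v: "v \<noteq> 0" "b = (v + inverse v)/2" using param_exists by blast
  define X where "X = u/v"
  define Y where "Y = u*v"
  have E: "\<And>n. poly (cheb_T n) a = poly (cheb_T n) b \<longleftrightarrow> X^n = 1 \<or> Y^n = 1"
    unfolding u(2) v(2) X_def Y_def by (rule cheb_eq_iff[OF u(1) v(1)])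
  have G: "\<And>p q. (X^p = 1 \<and> X^q = 1) \<or> (Y^p = 1 \<and> Y^q = 1)
      \<Longrightarrow> poly (cheb_T (gcd p q)) a = poly (cheb_T (gcd p q)) b"
  proof -
    fix p q assume "(X^p = 1 \<and> X^q = 1) \<or> (Y^p = 1 \<and> Y^q = 1)"
    hence "X^(gcd p q) = 1 \<or> Y^(gcd p q) = 1" using pow_gcd[of X p q] pow_gcd[of Y p q] by blast
    thus "poly (cheb_T (gcd p q)) a = poly (cheb_T (gcd p q)) b" using E by blast
  qed
  have A: "poly (cheb_T m1) a = poly (cheb_T m1) b \<and> poly (cheb_T m2) a = poly (cheb_T m2) b
           \<longrightarrow> poly (cheb_T (gcd m1 m2)) a = poly (cheb_T (gcd m1 m2)) b
               \<or> (poly (pderiv (cheb_T (m1 * m2))) a = 0 \<and> poly (pderiv (cheb_T (m1 * m2))) b = 0)"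
  proof
    assume h: "poly (cheb_T m1) a = poly (cheb_T m1) b \<and> poly (cheb_T m2) a = poly (cheb_T m2) b"
    hence h1: "X^m1 = 1 \<or> Y^m1 = 1" and h2: "X^m2 = 1 \<or> Y^m2 = 1" using E by auto
    show "poly (cheb_T (gcd m1 m2)) a = poly (cheb_T (gcd m1 m2)) b
               \<or> (poly (pderiv (cheb_T (m1 * m2))) a = 0 \<and> poly (pderiv (cheb_T (m1 * m2))) b = 0)"
    proof (cases "(X^m1 = 1 \<and> X^m2 = 1) \<or> (Y^m1 = 1 \<and> Y^m2 = 1)")
      case True then show ?thesis using G by blast
    next
      case False
      show ?thesis
      proof (cases "X^m1 = 1")
        case True
        hence "Y^m2 = 1" using False h2 by auto
        have "(X^(gcd m1 m2) = 1 \<or> Y^(gcd m1 m2) = 1)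
            \<or> (poly (pderiv (cheb_T (m1 * m2))) a = 0 \<and> poly (pderiv (cheb_T (m1 * m2))) b = 0)"
          using mixed[OF u(1) v(1), of m1 m2] True \<open>Y^m2 = 1\<close> unfolding X_def Y_def u(2) v(2) by blast
        thus ?thesis using E by blast
      next
        case c: False
        hence "Y^m1 = 1" "X^m2 = 1" using False h1 h2 by auto
        hence "(X^(gcd m2 m1) = 1 \<or> Y^(gcd m2 m1) = 1)
            \<or> (poly (pderiv (cheb_T (m2 * m1))) a = 0 \<and> poly (pderiv (cheb_T (m2 * m1))) b = 0)"
          using mixed[OF u(1) v(1), of m2 m1] unfolding X_def Y_def u(2) v(2) by blast
        thus ?thesis using E by (simp add: gcd.commute mult.commute)
      qed
    qed
  qed
  have B: "poly (cheb_T m1) a = poly (cheb_T m1) b \<and> poly (cheb_T m2) a = poly (cheb_T m2) b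
           \<and> poly (cheb_T m3) a = poly (cheb_T m3) b
           \<longrightarrow> (\<exists>i1\<in>{1::nat,2,3}. \<exists>i2\<in>{1::nat,2,3}. i1 \<noteq> i2 \<and>
                 (let m = (\<lambda>i::nat. if i = 1 then m1 else if i = 2 then m2 else m3);
                      l = gcd (m i1) (m i2)
                  in poly (cheb_T l) a = poly (cheb_T l) b))"
  proof
    assume h: "poly (cheb_T m1) a = poly (cheb_T m1) b \<and> poly (cheb_T m2) a = poly (cheb_T m2) b
           \<and> poly (cheb_T m3) a = poly (cheb_T m3) b"
    hence h1: "X^m1 = 1 \<or> Y^m1 = 1" and h2: "X^m2 = 1 \<or> Y^m2 = 1" and h3: "X^m3 = 1 \<or> Y^m3 = 1"
      using E by auto
    have "poly (cheb_T (gcd m1 m2)) a = poly (cheb_T (gcd m1 m2)) b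
        \<or> poly (cheb_T (gcd m1 m3)) a = poly (cheb_T (gcd m1 m3)) b
        \<or> poly (cheb_T (gcd m2 m3)) a = poly (cheb_T (gcd m2 m3)) b"
      using h1 h2 h3 G[of m1 m2] G[of m1 m3] G[of m2 m3] by blast
    thus "\<exists>i1\<in>{1::nat,2,3}. \<exists>i2\<in>{1::nat,2,3}. i1 \<noteq> i2 \<and>
                 (let m = (\<lambda>i::nat. if i = 1 then m1 else if i = 2 then m2 else m3);
                      l = gcd (m i1) (m i2)
                  in poly (cheb_T l) a = poly (cheb_T l) b)"
    proof (elim disjE)
      assume "poly (cheb_T (gcd m1 m2)) a = poly (cheb_T (gcd m1 m2)) b"
      thus ?thesis by (intro bexI[of _ 1] bexI[of _ 2]) auto
    next
      assume "poly (cheb_T (gcd m1 m3)) a = poly (cheb_T (gcd m1 m3)) b"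
      thus ?thesis by (intro bexI[of _ 1] bexI[of _ 3]) auto
    next
      assume "poly (cheb_T (gcd m2 m3)) a = poly (cheb_T (gcd m2 m3)) b"
      thus ?thesis by (intro bexI[of _ 2] bexI[of _ 3]) auto
    qed
  qed
  show ?thesis using A B by blast
qed

end
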